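(* Let $2\le n\le l$ be integers, let $L_l=\{a_1<\dots<a_l\}$ be the linearly ordered semilattice of $l$ elements, and let $t(X)=s(X)$ be an equation over $L_l$ in the variables $X=\{x_1,\dots,x_n\}$ in which every variable occurs, with $|\mathrm{Var}(t)\setminus\mathrm{Var}(s)|=k_1$ and $|\mathrm{Var}(s)\setminus\mathrm{Var}(t)|=k_2$. Then the number of irreducible components of the solution set $V(t(X)=s(X))\subseteq L_l^n$ equals $(n-k_1-k_2)(n-1)!+k_1k_2(n-2)!$.
   Context: $L_l$ has multiplication $a_ia_j=a_{\min(i,j)}$. A term is a commutative word in $x_1,\dots,x_n$; $\mathrm{Var}(t)$ is the set of variables occurring in $t$. An equation is an ordered pair of terms $t(X)=s(X)$; $P\in L_l^n$ is a solution if $t(P)=s(P)$. For a system $S$ of equations, $V(S)$ is its set of common solutions; $Y\subseteq L_l^n$ is algebraic if $Y=V(S)$ for some system $S$; an algebraic set is irreducible if it is not a proper finite union of other algebraic sets. Every algebraic set is uniquely (up to order) a finite union $Y_1\cup\dots\cup Y_m$ of irreducible algebraic sets with $Y_i\not\subseteq Y_j$ for $i\ne j$; these $Y_i$ are its irreducible components. *)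

theory Defs
  imports Main "HOL-Library.Multiset"
begin

text \<open>The semilattice L_l: element a_i is represented by the natural number i, 1 <= i <= l;
  the product a_i a_j = a_(min i j) is min. Variables x_1..x_n are indices 0..n-1.
  A term is a commutative word, i.e. a nonempty finite multiset of variables.\<close>

definition is_term :: "nat \<Rightarrow> nat multiset \<Rightarrow> bool" where
  "is_term n t \<longleftrightarrow> t \<noteq> {#} \<and> set_mset t \<subseteq> {..<n}"

definition Var :: "nat multiset \<Rightarrow> nat set" where
  "Var t = set_mset t"

definition points :: "nat \<Rightarrow> nat \<Rightarrow> nat list set" where
  "points l n = {P. length P = n \<and> set P \<subseteq> {1..l}}"

definition term_val :: "nat multiset \<Rightarrow> nat list \<Rightarrow> nat" where
  "term_val t P = Min ((\<lambda>i. P ! i) ` set_mset t)"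

definition Vset :: "nat \<Rightarrow> nat \<Rightarrow> (nat multiset \<times> nat multiset) set \<Rightarrow> nat list set" where
  "Vset l n S = {P \<in> points l n. \<forall>(t, s) \<in> S. term_val t P = term_val s P}"

definition algebraic :: "nat \<Rightarrow> nat \<Rightarrow> nat list set \<Rightarrow> bool" where
  "algebraic l n Y \<longleftrightarrow> (\<exists>S. (\<forall>(t, s) \<in> S. is_term n t \<and> is_term n s) \<and> Y = Vset l n S)"

definition irreducible_alg :: "nat \<Rightarrow> nat \<Rightarrow> nat list set \<Rightarrow> bool" where
  "irreducible_alg l n Y \<longleftrightarrow> algebraic l n Y \<and>
     \<not> (\<exists>F. finite F \<and> (\<forall>Z\<in>F. algebraic l n Z \<and> Z \<noteq> Y) \<and> Y = \<Union>F)"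

definition irr_decomposition :: "nat \<Rightarrow> nat \<Rightarrow> nat list set \<Rightarrow> nat list set set \<Rightarrow> bool" where
  "irr_decomposition l n Y C \<longleftrightarrow> finite C \<and> (\<forall>Z\<in>C. irreducible_alg l n Z) \<and> Y = \<Union>C \<and>
     (\<forall>Z1\<in>C. \<forall>Z2\<in>C. Z1 \<subseteq> Z2 \<longrightarrow> Z1 = Z2)"

end

theory Submission
  imports Defs "HOL-Combinatorics.Multiset_Permutations"
begin

definition cell :: "nat \<Rightarrow> nat \<Rightarrow> (nat \<Rightarrow> nat) \<Rightarrow> nat list set" where
  "cell l n r = {P \<in> points l n. \<forall>x<n. \<forall>y<n. r x \<le> r y \<longrightarrow> P!x \<le> P!y}"

definition gen :: "nat \<Rightarrow> (nat \<Rightarrow> nat) \<Rightarrow> nat list" where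
  "gen n r = map (\<lambda>x. Suc (r x)) [0..<n]"

lemma term_val_eq:
  assumes "c \<in> set_mset T" "\<forall>y\<in>set_mset T. P!c \<le> P!y"
  shows "term_val T P = P!c"
  unfolding term_val_def using assms by (intro Min_eqI) auto

lemma term_min:
  fixes r :: "nat \<Rightarrow> nat"
  assumes "is_term n T"
  obtains x where "x \<in> set_mset T" "\<forall>y\<in>set_mset T. r x \<le> r y"
proof -
  have ne: "set_mset T \<noteq> {}" using assms by (auto simp: is_term_def)
  have "Min (r ` set_mset T) \<in> r ` set_mset T" using ne by (intro Min_in) auto
  then obtain x where "x \<in> set_mset T" "r x = Min (r ` set_mset T)" by auto
  then show ?thesis using that by auto
qed

lemma gen_points: "\<forall>x<n. r x < l \<Longrightarrow> gen n r \<in> points l n"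
  by (auto simp: gen_def points_def Suc_le_eq)

lemma gen_cell: "\<forall>x<n. r x < l \<Longrightarrow> gen n r \<in> cell l n r"
  using gen_points by (auto simp: cell_def gen_def)

lemma gen_key:
  assumes rl: "\<forall>x<n. r x < l" and alg: "algebraic l n Z" and g: "gen n r \<in> Z"
  shows "cell l n r \<subseteq> Z"
proof
  fix P assume P: "P \<in> cell l n r"
  obtain Sy where Sy: "\<forall>(t, s) \<in> Sy. is_term n t \<and> is_term n s" and Z: "Z = Vset l n Sy"
    using alg by (auto simp: algebraic_def)
  have key: "term_val T (gen n r) = Suc (r x) \<and> term_val T P = P!x"
    if T: "is_term n T" "x \<in> set_mset T" "\<forall>y\<in>set_mset T. r x \<le> r y" for T x
  proof -
    have sub: "set_mset T \<subseteq> {..<n}" using T by (auto simp: is_term_def)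
    have "term_val T (gen n r) = gen n r ! x"
      using T sub by (intro term_val_eq) (auto simp: gen_def subset_iff)
    moreover have "gen n r ! x = Suc (r x)" using T sub by (auto simp: gen_def)
    moreover have "term_val T P = P!x"
      using T sub P by (intro term_val_eq) (auto simp: cell_def subset_iff)
    ultimately show ?thesis by simp
  qed
  have "P \<in> points l n" using P by (auto simp: cell_def)
  moreover have "term_val T P = term_val S P" if TS: "(T, S) \<in> Sy" for T S
  proof -
    have tT: "is_term n T" and tS: "is_term n S" using Sy TS by auto
    obtain x where x: "x \<in> set_mset T" "\<forall>y\<in>set_mset T. r x \<le> r y" using term_min[OF tT] by blast
    obtain x' where x': "x' \<in> set_mset S" "\<forall>y\<in>set_mset S. r x' \<le> r y" using term_min[OF tS] by blast
    have "term_val T (gen n r) = term_val S (gen n r)" using g Z TS by (auto simp: Vset_def)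
    hence "r x = r x'" using key[OF tT x] key[OF tS x'] by simp
    moreover have "x < n" "x' < n" using x x' tT tS by (auto simp: is_term_def)
    ultimately have "P!x = P!x'" using P by (auto simp: cell_def intro: antisym)
    thus ?thesis using key[OF tT x] key[OF tS x'] by simp
  qed
  ultimately show "P \<in> Z" using Z by (auto simp: Vset_def)
qed

lemma cell_algebraic: "algebraic l n (cell l n r)"
proof -
  let ?S = "{({#x,y#}, {#x#}) | x y. x<n \<and> y<n \<and> r x \<le> r y}"
  have tv2: "term_val {#x,y#} P = min (P!x) (P!y)" for x y P
    by (simp add: term_val_def)
  have tv1: "term_val {#x#} P = P!x" for x P by (simp add: term_val_def)
  have "cell l n r = Vset l n ?S"
  proof (intro set_eqI iffI)
    fix P assume "P \<in> cell l n r" thus "P \<in> Vset l n ?S"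
      by (auto simp: cell_def Vset_def tv2 tv1 min_def)
  next
    fix P assume P: "P \<in> Vset l n ?S"
    have "P!x \<le> P!y" if "x<n" "y<n" "r x \<le> r y" for x y
    proof -
      have "({#x,y#}, {#x#}) \<in> ?S" using that by blast
      hence "term_val {#x,y#} P = term_val {#x#} P" using P by (auto simp: Vset_def)
      thus ?thesis by (simp add: tv1 tv2 min_def split: if_splits)
    qed
    thus "P \<in> cell l n r" using P by (auto simp: cell_def Vset_def)
  qed
  moreover have "\<forall>(t, s) \<in> ?S. is_term n t \<and> is_term n s" by (auto simp: is_term_def)
  ultimately show ?thesis unfolding algebraic_def by blast
qed

lemma cell_irreducible:
  assumes rl: "\<forall>x<n. r x < l"
  shows "irreducible_alg l n (cell l n r)"
  unfolding irreducible_alg_def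
proof (intro conjI notI)
  show "algebraic l n (cell l n r)" by (rule cell_algebraic)
  assume "\<exists>F. finite F \<and> (\<forall>Z\<in>F. algebraic l n Z \<and> Z \<noteq> cell l n r) \<and> cell l n r = \<Union>F"
  then obtain F where F: "\<forall>Z\<in>F. algebraic l n Z \<and> Z \<noteq> cell l n r" "cell l n r = \<Union>F" by blast
  have "gen n r \<in> \<Union>F" using gen_cell[OF rl] F by simp
  then obtain Z where Z: "Z \<in> F" "gen n r \<in> Z" by blast
  have "cell l n r \<subseteq> Z" using gen_key[OF rl _ Z(2)] F Z by auto
  moreover have "Z \<subseteq> cell l n r" using F Z by auto
  ultimately show False using F Z by auto
qed

lemma algebraic_Int: "algebraic l n Y \<Longrightarrow> algebraic l n Z \<Longrightarrow> algebraic l n (Y \<inter> Z)"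
proof -
  assume "algebraic l n Y" "algebraic l n Z"
  then obtain S1 S2 where "\<forall>(t, s) \<in> S1. is_term n t \<and> is_term n s" "Y = Vset l n S1"
    "\<forall>(t, s) \<in> S2. is_term n t \<and> is_term n s" "Z = Vset l n S2" by (auto simp: algebraic_def)
  moreover have "Vset l n S1 \<inter> Vset l n S2 = Vset l n (S1 \<union> S2)" by (auto simp: Vset_def)
  ultimately show ?thesis unfolding algebraic_def by (metis Un_iff)
qed

lemma irr_in:
  assumes irr: "irreducible_alg l n Z" and C: "finite C" "\<forall>W\<in>C. algebraic l n W" "Z \<subseteq> \<Union>C"
  shows "\<exists>W\<in>C. Z \<subseteq> W"
proof (rule ccontr)
  assume no: "\<not> ?thesis"
  let ?F = "(\<lambda>W. Z \<inter> W) ` C"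
  have "finite ?F" using C by simp
  moreover have "\<forall>X\<in>?F. algebraic l n X \<and> X \<noteq> Z"
    using no C irr algebraic_Int by (auto simp: irreducible_alg_def)
  moreover have "Z = \<Union>?F" using C by auto
  ultimately show False using irr unfolding irreducible_alg_def by blast
qed

lemma decomp_sub:
  assumes D1: "irr_decomposition l n Y C1" and D2: "irr_decomposition l n Y C2"
  shows "C1 \<subseteq> C2"
proof
  fix Z assume Z: "Z \<in> C1"
  have alg: "\<forall>W\<in>C. algebraic l n W" if "irr_decomposition l n Y C" for C
    using that by (auto simp: irr_decomposition_def irreducible_alg_def)
  have "irreducible_alg l n Z" using D1 Z by (auto simp: irr_decomposition_def)
  moreover have "Z \<subseteq> \<Union>C2" using D1 D2 Z by (auto simp: irr_decomposition_def)
  ultimately obtain W where W: "W \<in> C2" "Z \<subseteq> W"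
    using irr_in[of l n Z C2] alg[OF D2] D2 by (auto simp: irr_decomposition_def)
  have "irreducible_alg l n W" using D2 W by (auto simp: irr_decomposition_def)
  moreover have "W \<subseteq> \<Union>C1" using D1 D2 W by (auto simp: irr_decomposition_def)
  ultimately obtain Z' where Z': "Z' \<in> C1" "W \<subseteq> Z'"
    using irr_in[of l n W C1] alg[OF D1] D1 by (auto simp: irr_decomposition_def)
  have "Z = Z'" using D1 Z Z' W unfolding irr_decomposition_def by blast
  then have "Z = W" using W Z' by auto
  thus "Z \<in> C2" using W by simp
qed

lemma decomp_unique:
  "irr_decomposition l n Y C1 \<Longrightarrow> irr_decomposition l n Y C2 \<Longrightarrow> C1 = C2"
  using decomp_sub by blast



fun pos :: "nat list \<Rightarrow> nat \<Rightarrow> nat" where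
  "pos [] x = 0"
| "pos (y#ys) x = (if x = y then 0 else Suc (pos ys x))"

lemma pos_nth: "distinct xs \<Longrightarrow> i < length xs \<Longrightarrow> pos xs (xs!i) = i"
proof (induction xs arbitrary: i)
  case Nil then show ?case by simp
next
  case (Cons a xs) then show ?case by (cases i) (auto simp: nth_mem)
qed

lemma nth_pos: "x \<in> set xs \<Longrightarrow> xs ! pos xs x = x"
  by (induction xs) auto

lemma pos_less: "x \<in> set xs \<Longrightarrow> pos xs x < length xs"
  by (induction xs) auto

lemma pos_inj: "x \<in> set xs \<Longrightarrow> y \<in> set xs \<Longrightarrow> pos xs x = pos xs y \<Longrightarrow> x = y"
  by (metis nth_pos)

lemma pos_Cons0: "pos (b#ys) x = 0 \<longleftrightarrow> x = b" by simp

lemma sorted_pos: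
  assumes "sorted (map f xs)" "x \<in> set xs" "y \<in> set xs" "pos xs x \<le> pos xs y"
  shows "f x \<le> f y"
proof -
  have "(map f xs) ! pos xs x \<le> (map f xs) ! pos xs y"
    using assms by (intro sorted_nth_mono) (auto simp: pos_less)
  thus ?thesis using assms by (simp add: pos_less nth_pos)
qed

lemma list_eq_pos:
  assumes "distinct xs" "distinct ys" "set xs = set ys" "\<forall>x\<in>set xs. pos xs x = pos ys x"
  shows "xs = ys"
proof (rule nth_equalityI)
  show len: "length xs = length ys" using assms by (metis distinct_card)
  fix i assume i: "i < length xs"
  have "xs!i \<in> set ys" using i assms by (auto simp: nth_mem)
  moreover have "pos ys (xs!i) = i" using assms i pos_nth[of xs i] by (metis nth_mem)
  ultimately show "xs!i = ys!i" by (metis nth_pos)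
qed

lemma rank_eq:
  fixes r1 r2 :: "nat \<Rightarrow> nat"
  assumes N1: "\<forall>x<n. \<forall>w<r1 x. \<exists>y<n. r1 y = w"
    and N2: "\<forall>x<n. \<forall>w<r2 x. \<exists>y<n. r2 y = w"
    and Iff: "\<forall>x<n. \<forall>y<n. r1 x < r1 y \<longleftrightarrow> r2 x < r2 y"
  shows "\<forall>x<n. r1 x = r2 x"
proof -
  have "\<forall>x. x < n \<longrightarrow> r1 x = v \<longrightarrow> r2 x = v" for v
  proof (induction v rule: less_induct)
    case (less v)
    show ?case
    proof (intro allI impI)
      fix x assume x: "x < n" "r1 x = v"
      have ge: "r2 x \<ge> v"
      proof (cases v)
        case 0 then show ?thesis by simp
      next
        case (Suc w)
        then obtain y where y: "y < n" "r1 y = w" using N1 x by (metis lessI)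
        have "r2 y = w" using less y Suc by auto
        moreover have "r2 y < r2 x" using Iff x y Suc by (metis lessI)
        ultimately show ?thesis using Suc by simp
      qed
      have le: "r2 x \<le> v"
      proof (rule ccontr)
        assume "\<not> r2 x \<le> v"
        then obtain z where z: "z < n" "r2 z = v" using N2 x by (meson not_le)
        have "r2 z < r2 x" using z \<open>\<not> r2 x \<le> v\<close> by simp
        hence "r1 z < v" using Iff x z by auto
        hence "r2 z = r1 z" using less z by auto
        thus False using z \<open>r1 z < v\<close> by simp
      qed
      show "r2 x = v" using ge le by simp
    qed
  qed
  thus ?thesis by auto
qed



definition rk :: "nat option \<Rightarrow> nat list \<Rightarrow> nat \<Rightarrow> nat" where
  "rk o' xs = (case o' of None \<Rightarrow> pos xs | Some a \<Rightarrow> (\<lambda>x. if x = a then 0 else pos xs x))"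

definition R :: "nat option \<times> nat list \<Rightarrow> nat \<Rightarrow> nat" where
  "R i = rk (fst i) (snd i)"

lemma R_None[simp]: "R (None, xs) = pos xs" by (simp add: R_def rk_def)
lemma R_Some[simp]: "R (Some a, xs) x = (if x = a then 0 else pos xs x)" by (simp add: R_def rk_def)

locale setting =
  fixes n :: nat and T S :: "nat set"
  assumes TS: "T \<union> S = {..<n}"
begin

definition I1 where
  "I1 = {(None::nat option, xs) | xs. distinct xs \<and> set xs = {..<n} \<and> xs \<noteq> [] \<and> hd xs \<in> T \<inter> S}"
definition I2 where
  "I2 = {(Some a, zs) | a zs. a \<in> T - S \<and> distinct zs \<and> set zs = {..<n} - {a} \<and> zs \<noteq> [] \<and> hd zs \<in> S - T}"

definition z0 where "z0 i = {x. x < n \<and> R i x = 0}"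

lemma I1_cases:
  assumes "i \<in> I1"
  obtains c ys where "i = (None, c#ys)" "distinct (c#ys)" "set (c#ys) = {..<n}" "c \<in> T" "c \<in> S"
  using assms unfolding I1_def by (auto simp: neq_Nil_conv)

lemma I2_cases:
  assumes "i \<in> I2"
  obtains a b ys where "i = (Some a, b#ys)" "distinct (b#ys)" "set (b#ys) = {..<n} - {a}"
    "a \<in> T" "a \<notin> S" "b \<in> S" "b \<notin> T"
  using assms unfolding I2_def by (auto simp: neq_Nil_conv)

lemma R_less: "i \<in> I1 \<union> I2 \<Longrightarrow> x < n \<Longrightarrow> R i x < n"
proof (elim UnE)
  assume "i \<in> I1" "x < n" then show ?thesis
  proof (elim I1_cases)
    fix c ys assume *: "i = (None, c # ys)" "distinct (c # ys)" "set (c # ys) = {..<n}"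
    have "length (c#ys) = n" using * by (metis distinct_card card_lessThan)
    thus ?thesis using * \<open>x<n\<close> pos_less[of x "c#ys"] by simp
  qed
next
  assume i: "i \<in> I2" "x < n"
  then obtain a b ys where *: "i = (Some a, b#ys)" "distinct (b#ys)" "set (b#ys) = {..<n} - {a}"
    by (elim I2_cases) auto
  show ?thesis
  proof (cases "x = a")
    case True then show ?thesis using * i by auto
  next
    case False
    then have "x \<in> set (b#ys)" using * i by auto
    then have "pos (b#ys) x < length (b#ys)" by (rule pos_less)
    moreover have "length (b#ys) \<le> n" using * by (metis distinct_card card_mono finite_lessThan Diff_subset card_lessThan)
    ultimately show ?thesis using * False by auto
  qed
qed

lemma R_norm: "i \<in> I1 \<union> I2 \<Longrightarrow> x < n \<Longrightarrow> w < R i x \<Longrightarrow> \<exists>y<n. R i y = w"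
proof (elim UnE)
  assume "i \<in> I1" "x < n" "w < R i x"
  then obtain xs where *: "i = (None, xs)" "distinct xs" "set xs = {..<n}"
    by (elim I1_cases) auto
  have "x \<in> set xs" using * \<open>x<n\<close> by auto
  hence "w < length xs" using * \<open>w < R i x\<close> pos_less[of x xs] by auto
  hence "xs!w \<in> set xs" by (rule nth_mem)
  thus ?thesis using * \<open>w < length xs\<close> by (intro exI[of _ "xs!w"]) (auto simp: pos_nth)
next
  assume i: "i \<in> I2" "x < n" "w < R i x"
  then obtain a zs where *: "i = (Some a, zs)" "distinct zs" "set zs = {..<n} - {a}"
    by (elim I2_cases) auto
  have xa: "x \<noteq> a" using i * by (auto split: if_splits)
  have "x \<in> set zs" using * xa \<open>x<n\<close> by auto
  hence "w < length zs" using * xa \<open>w < R i x\<close> pos_less[of x zs] by auto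
  hence "zs!w \<in> set zs" by (rule nth_mem)
  thus ?thesis using * \<open>w < length zs\<close> by (intro exI[of _ "zs!w"]) (auto simp: pos_nth)
qed

lemma z0_I1: "c < n \<Longrightarrow> z0 (None, c#ys) = {c}"
  unfolding z0_def by auto

lemma z0_I2: "a < n \<Longrightarrow> b < n \<Longrightarrow> z0 (Some a, b#ys) = {a, b}"
  unfolding z0_def by auto

lemma ker:
  assumes "i \<in> I1 \<union> I2" "x < n" "y < n" "R i x = R i y" "x \<noteq> y"
  shows "x \<in> z0 i \<and> y \<in> z0 i"
  using assms(1)
proof (elim UnE)
  assume "i \<in> I1"
  then obtain xs where *: "i = (None, xs)" "set xs = {..<n}" by (elim I1_cases) auto
  then show ?thesis using assms pos_inj[of x xs y] by auto
next
  assume "i \<in> I2"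
  then obtain a zs where *: "i = (Some a, zs)" "set zs = {..<n} - {a}" by (elim I2_cases) auto
  show ?thesis
  proof (cases "x = a \<or> y = a")
    case True then show ?thesis using assms * by (auto simp: z0_def split: if_splits)
  next
    case False
    then show ?thesis using assms * pos_inj[of x zs y] by auto
  qed
qed

lemma z0_ne: "i \<in> I1 \<union> I2 \<Longrightarrow> \<exists>c. c \<in> z0 i"
proof (elim UnE)
  assume "i \<in> I1" then show ?thesis
    by (elim I1_cases) (auto simp: z0_def)
next
  assume "i \<in> I2" then show ?thesis
    by (elim I2_cases) (auto simp: z0_def)
qed


lemma z0_form1: "i \<in> I1 \<Longrightarrow> \<exists>c. z0 i = {c} \<and> c \<in> T \<and> c \<in> S"
proof (elim I1_cases)
  fix c ys assume *: "i = (None, c # ys)" "c \<in> T" "c \<in> S"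
  have "c < n" using * TS by auto
  thus ?thesis using * z0_I1 by blast
qed

lemma z0_form2: "i \<in> I2 \<Longrightarrow> \<exists>a b. z0 i = {a, b} \<and> a \<in> T \<and> a \<notin> S \<and> b \<in> S \<and> b \<notin> T"
proof (elim I2_cases)
  fix a b ys assume *: "i = (Some a, b # ys)" "distinct (b#ys)" "set (b#ys) = {..<n} - {a}"
    "a \<in> T" "a \<notin> S" "b \<in> S" "b \<notin> T"
  have "a < n" "b < n" using * TS by auto
  thus ?thesis using * z0_I2 by blast
qed

lemma sub_eq:
  assumes i: "i \<in> I1 \<union> I2" and j: "j \<in> I1 \<union> I2"
    and H: "\<forall>x<n. \<forall>y<n. R j x \<le> R j y \<longrightarrow> R i x \<le> R i y"
  shows "i = j"
proof -
  have zsub: "z0 j \<subseteq> z0 i"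
  proof
    fix x assume x: "x \<in> z0 j"
    obtain c where c: "c \<in> z0 i" using z0_ne[OF i] by blast
    have xn: "x < n" "R j x = 0" "c < n" "R i c = 0" using x c by (auto simp: z0_def)
    hence "R i x \<le> R i c" using H by (metis le0)
    thus "x \<in> z0 i" using x c by (auto simp: z0_def)
  qed
  have zeq: "z0 i = z0 j"
    using i j
  proof (elim UnE)
    assume "i \<in> I1" "j \<in> I1"
    obtain c where c: "z0 i = {c}" using z0_form1[OF \<open>i \<in> I1\<close>] by blast
    obtain c' where c': "z0 j = {c'}" using z0_form1[OF \<open>j \<in> I1\<close>] by blast
    show ?thesis using zsub c c' by auto
  next
    assume "i \<in> I1" "j \<in> I2"
    then obtain c a b where "z0 i = {c}" "c \<in> S" "z0 j = {a, b}" "a \<notin> S"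
      using z0_form1 z0_form2 by blast
    thus ?thesis using zsub by auto
  next
    assume "i \<in> I2" "j \<in> I1"
    then obtain c a b where "z0 j = {c}" "c \<in> S" "c \<in> T" "z0 i = {a, b}" "a \<notin> S" "b \<notin> T"
      using z0_form1 z0_form2 by blast
    thus ?thesis using zsub by auto
  next
    assume "i \<in> I2" "j \<in> I2"
    obtain a b where ab: "z0 i = {a, b}" "a \<in> T" "a \<notin> S" "b \<in> S" "b \<notin> T"
      using z0_form2[OF \<open>i \<in> I2\<close>] by blast
    obtain a' b' where ab': "z0 j = {a', b'}" "a' \<in> T" "a' \<notin> S" "b' \<in> S" "b' \<notin> T"
      using z0_form2[OF \<open>j \<in> I2\<close>] by blast
    have "a' = a" "b' = b" using zsub ab ab' by auto
    thus ?thesis using ab ab' by simp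
  qed
  have kern: "R j x = R j y" if "x < n" "y < n" "R i x = R i y" for x y
  proof (cases "x = y")
    case False
    then have "x \<in> z0 i \<and> y \<in> z0 i" using ker[OF i that False] by blast
    then have "x \<in> z0 j \<and> y \<in> z0 j" using zeq by simp
    then show ?thesis by (simp add: z0_def)
  qed simp
  have Iff: "\<forall>x<n. \<forall>y<n. R i x < R i y \<longleftrightarrow> R j x < R j y"
  proof (intro allI impI iffI)
    fix x y assume xy: "x < n" "y < n" "R i x < R i y"
    show "R j x < R j y"
    proof (rule ccontr)
      assume "\<not> R j x < R j y"
      hence "R j y \<le> R j x" by simp
      hence "R i y \<le> R i x" using H xy(1,2) by blast
      thus False using xy by simp
    qed
  next
    fix x y assume xy: "x < n" "y < n" "R j x < R j y"
    hence "R i x \<le> R i y" using H by auto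
    moreover have "R i x \<noteq> R i y"
    proof
      assume "R i x = R i y"
      hence "R j x = R j y" using kern xy(1,2) by blast
      thus False using xy(3) by simp
    qed
    ultimately show "R i x < R i y" by simp
  qed
  have req: "\<forall>x<n. R i x = R j x"
  proof (rule rank_eq[OF _ _ Iff])
    show "\<forall>x<n. \<forall>w<R i x. \<exists>y<n. R i y = w" using R_norm[OF i] by blast
    show "\<forall>x<n. \<forall>w<R j x. \<exists>y<n. R j y = w" using R_norm[OF j] by blast
  qed
  show ?thesis
    using i j
  proof (elim UnE)
    assume "i \<in> I1" "j \<in> I1" thus ?thesis
    proof (elim I1_cases)
      fix c ys c' ys'
      assume *: "i = (None, c # ys)" "distinct (c # ys)" "set (c # ys) = {..<n}"
        and **: "j = (None, c' # ys')" "distinct (c' # ys')" "set (c' # ys') = {..<n}"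
      have "c # ys = c' # ys'" using * ** req by (intro list_eq_pos) auto
      thus ?thesis using * ** by simp
    qed
  next
    assume "i \<in> I1" "j \<in> I2"
    then obtain c a b where "z0 i = {c}" "c \<in> S" "z0 j = {a, b}" "a \<notin> S"
      using z0_form1 z0_form2 by blast
    thus ?thesis using zeq by auto
  next
    assume "i \<in> I2" "j \<in> I1"
    then obtain c a b where "z0 j = {c}" "c \<in> S" "z0 i = {a, b}" "a \<notin> S"
      using z0_form1 z0_form2 by blast
    thus ?thesis using zeq by auto
  next
    assume "i \<in> I2" "j \<in> I2" thus ?thesis
    proof (elim I2_cases)
      fix a b ys a' b' ys'
      assume *: "i = (Some a, b # ys)" "distinct (b # ys)" "set (b # ys) = {..<n} - {a}"
         "a \<in> T" "a \<notin> S" "b \<in> S" "b \<notin> T"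
        and **: "j = (Some a', b' # ys')" "distinct (b' # ys')" "set (b' # ys') = {..<n} - {a'}"
         "a' \<in> T" "a' \<notin> S" "b' \<in> S" "b' \<notin> T"
      have "a < n" "b < n" "a' < n" "b' < n" using * ** TS by auto
      hence "{a, b} = {a', b'}" using zeq * ** z0_I2 by simp
      hence aa: "a = a'" using * ** by auto
      have "b # ys = b' # ys'"
      proof (rule list_eq_pos)
        show "set (b # ys) = set (b' # ys')" using * ** aa by simp
        show "\<forall>x\<in>set (b # ys). pos (b # ys) x = pos (b' # ys') x"
        proof
          fix x assume x: "x \<in> set (b # ys)"
          hence "x < n" "x \<noteq> a" using * by auto
          thus "pos (b # ys) x = pos (b' # ys') x" using req * ** aa
            by (metis R_Some)
        qed
      qed (use * ** in auto)
      thus ?thesis using * ** aa by simp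
    qed
  qed
qed

end



context setting
begin

lemma I1_eq: "I1 = (\<Union>c\<in>T\<inter>S. (\<lambda>ys. (None::nat option, c#ys)) ` permutations_of_set ({..<n}-{c}))"
proof (intro set_eqI iffI)
  fix i assume "i \<in> I1"
  then show "i \<in> (\<Union>c\<in>T\<inter>S. (\<lambda>ys. (None::nat option, c#ys)) ` permutations_of_set ({..<n}-{c}))"
  proof (elim I1_cases)
    fix c ys assume *: "i = (None, c # ys)" "distinct (c # ys)" "set (c # ys) = {..<n}" "c \<in> T" "c \<in> S"
    have "ys \<in> permutations_of_set ({..<n}-{c})" using * by (auto simp: permutations_of_set_def)
    thus ?thesis using * by blast
  qed
next
  fix i assume "i \<in> (\<Union>c\<in>T\<inter>S. (\<lambda>ys. (None::nat option, c#ys)) ` permutations_of_set ({..<n}-{c}))"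
  then obtain c ys where *: "c \<in> T" "c \<in> S" "ys \<in> permutations_of_set ({..<n}-{c})" "i = (None::nat option, c#ys)"
    by blast
  have "c < n" using * TS by auto
  thus "i \<in> I1" using * unfolding I1_def permutations_of_set_def by auto
qed

lemma I2_eq: "I2 = (\<Union>a\<in>T-S. \<Union>b\<in>S-T. (\<lambda>ys. (Some a, b#ys)) ` permutations_of_set ({..<n}-{a,b}))"
proof (intro set_eqI iffI)
  fix i assume "i \<in> I2"
  then show "i \<in> (\<Union>a\<in>T-S. \<Union>b\<in>S-T. (\<lambda>ys. (Some a, b#ys)) ` permutations_of_set ({..<n}-{a,b}))"
  proof (elim I2_cases)
    fix a b ys assume *: "i = (Some a, b # ys)" "distinct (b # ys)" "set (b # ys) = {..<n} - {a}"
      "a \<in> T" "a \<notin> S" "b \<in> S" "b \<notin> T"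
    have "ys \<in> permutations_of_set ({..<n}-{a,b})" using * by (auto simp: permutations_of_set_def)
    thus ?thesis using * by blast
  qed
next
  fix i assume "i \<in> (\<Union>a\<in>T-S. \<Union>b\<in>S-T. (\<lambda>ys. (Some a, b#ys)) ` permutations_of_set ({..<n}-{a,b}))"
  then obtain a b ys where *: "a \<in> T" "a \<notin> S" "b \<in> S" "b \<notin> T"
     "ys \<in> permutations_of_set ({..<n}-{a,b})" "i = (Some a, b#ys)"
    by blast
  have "a < n" "b < n" "a \<noteq> b" using * TS by auto
  thus "i \<in> I2" using * unfolding I2_def permutations_of_set_def by auto
qed

lemma fin_T: "finite T" and fin_S: "finite S"
  using TS by (metis finite_Un finite_lessThan)+

lemma finite_I1: "finite I1"
  unfolding I1_eq using fin_T by auto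

lemma finite_I2: "finite I2"
  unfolding I2_eq using fin_T fin_S by auto

lemma card_I1: "card I1 = card (T \<inter> S) * fact (n - 1)"
proof -
  have "card I1 = (\<Sum>c\<in>T\<inter>S. card ((\<lambda>ys. (None::nat option, c#ys)) ` permutations_of_set ({..<n}-{c})))"
    unfolding I1_eq
    apply (rule card_UN_disjoint)
    using fin_T apply auto
    done
  also have "\<dots> = (\<Sum>c\<in>T\<inter>S. fact (n - 1))"
  proof (rule sum.cong[OF refl])
    fix c assume c: "c \<in> T \<inter> S"
    hence cn: "c < n" using TS by auto
    have "card ((\<lambda>ys. (None::nat option, c#ys)) ` permutations_of_set ({..<n}-{c}))
        = card (permutations_of_set ({..<n}-{c}))"
      by (rule card_image) (auto simp: inj_on_def)
    also have "\<dots> = fact (card ({..<n}-{c}))" by simp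
    also have "card ({..<n}-{c}) = n - 1" using cn by simp
    finally show "card ((\<lambda>ys. (None::nat option, c#ys)) ` permutations_of_set ({..<n}-{c})) = fact (n - 1)" .
  qed
  also have "\<dots> = card (T \<inter> S) * fact (n - 1)" by simp
  finally show ?thesis .
qed

lemma card_I2: "card I2 = card (T - S) * card (S - T) * fact (n - 2)"
proof -
  have "card I2 = (\<Sum>a\<in>T-S. card (\<Union>b\<in>S-T. (\<lambda>ys. (Some a, b#ys)) ` permutations_of_set ({..<n}-{a,b})))"
    unfolding I2_eq
    by (rule card_UN_disjoint[where A="\<lambda>a. \<Union>b\<in>S-T. (\<lambda>ys. (Some a, b#ys)) ` permutations_of_set ({..<n}-{a,b})"]) (use fin_T fin_S in auto)
  also have "\<dots> = (\<Sum>a\<in>T-S. card (S - T) * fact (n - 2))"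
  proof (rule sum.cong[OF refl])
    fix a assume a: "a \<in> T - S"
    have "card (\<Union>b\<in>S-T. (\<lambda>ys. (Some a, b#ys)) ` permutations_of_set ({..<n}-{a,b}))
       = (\<Sum>b\<in>S-T. card ((\<lambda>ys. (Some a, b#ys)) ` permutations_of_set ({..<n}-{a,b})))"
      by (rule card_UN_disjoint[where A="\<lambda>b. (\<lambda>ys. (Some a, b#ys)) ` permutations_of_set ({..<n}-{a,b})"]) (use fin_S in auto)
    also have "\<dots> = (\<Sum>b\<in>S-T. fact (n - 2))"
    proof (rule sum.cong[OF refl])
      fix b assume b: "b \<in> S - T"
      have abn: "a < n" "b < n" "a \<noteq> b" using a b TS by auto
      have "card ((\<lambda>ys. (Some a, b#ys)) ` permutations_of_set ({..<n}-{a,b}))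
          = card (permutations_of_set ({..<n}-{a,b}))"
        by (rule card_image) (auto simp: inj_on_def)
      also have "\<dots> = fact (card ({..<n}-{a,b}))" by simp
      also have "card ({..<n}-{a,b}) = n - 2" using abn by (simp add: card_Diff_subset)
      finally show "card ((\<lambda>ys. (Some a, b#ys)) ` permutations_of_set ({..<n}-{a,b})) = fact (n - 2)" .
    qed
    also have "\<dots> = card (S - T) * fact (n - 2)" by simp
    finally show "card (\<Union>b\<in>S-T. (\<lambda>ys. (Some a, b#ys)) ` permutations_of_set ({..<n}-{a,b}))
       = card (S - T) * fact (n - 2)" .
  qed
  also have "\<dots> = card (T - S) * card (S - T) * fact (n - 2)" by simp
  finally show ?thesis .
qed

lemma card_I: "card (I1 \<union> I2) = card (T \<inter> S) * fact (n - 1) + card (T - S) * card (S - T) * fact (n - 2)"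
proof -
  have "I1 \<inter> I2 = {}" unfolding I1_def I2_def by auto
  thus ?thesis using card_Un_disjoint[OF finite_I1 finite_I2] card_I1 card_I2 by simp
qed

end



lemma term_val_le: "y \<in> set_mset t \<Longrightarrow> term_val t P \<le> P!y"
  unfolding term_val_def by (intro Min_le) auto

lemma term_val_in: "t \<noteq> {#} \<Longrightarrow> \<exists>u\<in>set_mset t. P!u = term_val t P"
proof -
  assume "t \<noteq> {#}"
  hence "term_val t P \<in> (\<lambda>i. P!i) ` set_mset t" unfolding term_val_def by (intro Min_in) auto
  thus ?thesis by auto
qed

context setting
begin

lemma cell_sub_V:
  assumes i: "i \<in> I1 \<union> I2" and Tt: "T = set_mset t" and Ss: "S = set_mset s"
  shows "cell l n (R i) \<subseteq> Vset l n {(t, s)}"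
proof
  fix P assume P: "P \<in> cell l n (R i)"
  have low: "\<forall>y<n. P!c \<le> P!y" if "c < n" "R i c = 0" for c
    using P that by (auto simp: cell_def)
  have Tn: "\<forall>y\<in>set_mset t. y < n" and Sn: "\<forall>y\<in>set_mset s. y < n" using TS Tt Ss by auto
  have "term_val t P = term_val s P"
    using i
  proof (elim UnE)
    assume "i \<in> I1"
    then obtain c ys where *: "i = (None, c#ys)" "c \<in> T" "c \<in> S" by (elim I1_cases) auto
    have cn: "c < n" using * TS by auto
    have l: "\<forall>y<n. P!c \<le> P!y" using low[OF cn] * by simp
    have "term_val t P = P!c" using * Tt Tn l by (intro term_val_eq) auto
    moreover have "term_val s P = P!c" using * Ss Sn l by (intro term_val_eq) auto
    ultimately show ?thesis by simp
  next
    assume "i \<in> I2"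
    then obtain a b ys where *: "i = (Some a, b#ys)" "a \<in> T" "b \<in> S" "set (b # ys) = {..<n} - {a}"
      by (elim I2_cases) auto
    have abn: "a < n" "b < n" "b \<noteq> a" using * TS by auto
    have la: "\<forall>y<n. P!a \<le> P!y" using low[of a] abn * by simp
    have lb: "\<forall>y<n. P!b \<le> P!y" using low[of b] abn * by simp
    have "term_val t P = P!a" using * Tt Tn la by (intro term_val_eq) auto
    moreover have "term_val s P = P!b" using * Ss Sn lb by (intro term_val_eq) auto
    moreover have "P!a = P!b" using la lb abn by (meson antisym)
    ultimately show ?thesis by simp
  qed
  moreover have "P \<in> points l n" using P by (auto simp: cell_def)
  ultimately show "P \<in> Vset l n {(t, s)}" by (auto simp: Vset_def)
qed

lemma V_sub:
  assumes Tt: "T = set_mset t" and Ss: "S = set_mset s" and tne: "t \<noteq> {#}" and sne: "s \<noteq> {#}"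
  shows "Vset l n {(t, s)} \<subseteq> (\<Union>i\<in>I1 \<union> I2. cell l n (R i))"
proof
  fix P assume PV: "P \<in> Vset l n {(t, s)}"
  hence Pp: "P \<in> points l n" and eq: "term_val t P = term_val s P" by (auto simp: Vset_def)
  define \<mu> where "\<mu> = term_val t P"
  define f where "f = (\<lambda>x. P!x)"
  obtain u where u: "u \<in> T" "P!u = \<mu>" using term_val_in[OF tne, of P] Tt \<mu>_def by auto
  obtain v where v: "v \<in> S" "P!v = \<mu>" using term_val_in[OF sne, of P] Ss eq \<mu>_def by auto
  have low: "\<mu> \<le> P!y" if "y < n" for y
  proof -
    have "y \<in> T \<or> y \<in> S" using that TS by auto
    thus ?thesis using term_val_le[of y t P] term_val_le[of y s P] Tt Ss eq \<mu>_def by auto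
  qed
  have un: "u < n" and vn: "v < n" using u v TS by auto
  show "P \<in> (\<Union>i\<in>I1 \<union> I2. cell l n (R i))"
  proof (cases "\<exists>c. c \<in> T \<and> c \<in> S \<and> P!c = \<mu>")
    case True
    then obtain c where c: "c \<in> T" "c \<in> S" "P!c = \<mu>" by blast
    have cn: "c < n" using c TS by auto
    define xs where "xs = c # sort_key f (filter (\<lambda>x. x \<noteq> c) [0..<n])"
    have sxs: "set xs = {..<n}" using cn by (auto simp: xs_def)
    have dxs: "distinct xs" by (simp add: xs_def)
    have sorted: "sorted (map f xs)"
      using low c by (auto simp: xs_def f_def)
    have "(None, xs) \<in> I1" unfolding I1_def using sxs dxs c by (auto simp: xs_def)
    moreover have "P \<in> cell l n (R (None, xs))"
      unfolding cell_def using Pp sorted_pos[OF sorted] sxs by (auto simp: f_def)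
    ultimately show ?thesis by blast
  next
    case False
    hence uS: "u \<notin> S" and vT: "v \<notin> T" using u v by auto
    define zs where "zs = v # sort_key f (filter (\<lambda>x. x \<noteq> u \<and> x \<noteq> v) [0..<n])"
    have uv: "u \<noteq> v" using uS v by auto
    have szs: "set zs = {..<n} - {u}" using vn uv by (auto simp: zs_def)
    have dzs: "distinct zs" by (simp add: zs_def)
    have sorted: "sorted (map f zs)"
      using low v by (auto simp: zs_def f_def)
    have "(Some u, zs) \<in> I2" unfolding I2_def using szs dzs u v uS vT by (auto simp: zs_def)
    moreover have "P \<in> cell l n (R (Some u, zs))"
      unfolding cell_def
    proof (intro CollectI conjI Pp allI impI)
      fix x y assume xy: "x < n" "y < n" "R (Some u, zs) x \<le> R (Some u, zs) y"
      show "P!x \<le> P!y"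
      proof (cases "x = u")
        case True then show ?thesis using u low xy by simp
      next
        case xu: False
        show ?thesis
        proof (cases "y = u")
          case True
          hence "pos zs x = 0" using xy xu by simp
          hence "x = v" by (simp add: zs_def split: if_splits)
          thus ?thesis using True u v by simp
        next
          case False
          have "x \<in> set zs" "y \<in> set zs" using szs xy xu False by auto
          moreover have "pos zs x \<le> pos zs y" using xy xu False by simp
          ultimately show ?thesis using sorted_pos[OF sorted] by (simp add: f_def)
        qed
      qed
    qed
    ultimately show ?thesis by blast
  qed
qed

lemma R_lt_l: "i \<in> I1 \<union> I2 \<Longrightarrow> n \<le> l \<Longrightarrow> \<forall>x<n. R i x < l"
  using R_less by fastforce

lemma cell_sub_iff:
  assumes i: "i \<in> I1 \<union> I2" and j: "j \<in> I1 \<union> I2" and nl: "n \<le> l"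
    and sub: "cell l n (R i) \<subseteq> cell l n (R j)"
  shows "i = j"
proof (rule sub_eq[OF i j])
  have "gen n (R i) \<in> cell l n (R j)" using gen_cell[OF R_lt_l[OF i nl]] sub by blast
  thus "\<forall>x<n. \<forall>y<n. R j x \<le> R j y \<longrightarrow> R i x \<le> R i y"
    by (auto simp: cell_def gen_def)
qed

end

theorem mainTheorem5:
  fixes l n k1 k2 :: nat and t s :: "nat multiset"
  assumes "2 \<le> n" and "n \<le> l"
    and "is_term n t" and "is_term n s"
    and "Var t \<union> Var s = {..<n}"
    and "card (Var t - Var s) = k1" and "card (Var s - Var t) = k2"
  shows "(\<exists>C. irr_decomposition l n (Vset l n {(t, s)}) C) \<and>
         (\<forall>C. irr_decomposition l n (Vset l n {(t, s)}) C \<longrightarrow>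
              card C = (n - k1 - k2) * fact (n - 1) + k1 * k2 * fact (n - 2))"
proof -
  let ?T = "Var t" and ?S = "Var s"
  interpret setting n ?T ?S using assms(5) by unfold_locales
  let ?I = "I1 \<union> I2"
  let ?D = "(\<lambda>i. cell l n (R i)) ` ?I"
  have tne: "t \<noteq> {#}" and sne: "s \<noteq> {#}" using assms(3,4) by (auto simp: is_term_def)
  have Tt: "?T = set_mset t" and Ss: "?S = set_mset s" by (simp_all add: Var_def)
  have inj: "inj_on (\<lambda>i. cell l n (R i)) ?I"
    by (rule inj_onI) (use cell_sub_iff assms(2) in blast)
  have dec: "irr_decomposition l n (Vset l n {(t, s)}) ?D"
    unfolding irr_decomposition_def
  proof (intro conjI ballI impI)
    show "finite ?D" using finite_I1 finite_I2 by simp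
    show "irreducible_alg l n Z" if "Z \<in> ?D" for Z
      using that cell_irreducible R_lt_l assms(2) by blast
    show "Vset l n {(t, s)} = \<Union>?D"
      using V_sub[OF Tt Ss tne sne] cell_sub_V[OF _ Tt Ss] by blast
    show "Z1 = Z2" if "Z1 \<in> ?D" "Z2 \<in> ?D" "Z1 \<subseteq> Z2" for Z1 Z2
      using that cell_sub_iff assms(2) by blast
  qed
  have cardD: "card ?D = card (?T \<inter> ?S) * fact (n - 1) + card (?T - ?S) * card (?S - ?T) * fact (n - 2)"
    using card_image[OF inj] card_I by simp
  have "n = card (?T - ?S) + card (?S - ?T) + card (?T \<inter> ?S)"
  proof -
    have "{..<n} = ((?T - ?S) \<union> (?S - ?T)) \<union> (?T \<inter> ?S)" using assms(5) by auto
    hence "card {..<n} = card (((?T - ?S) \<union> (?S - ?T)) \<union> (?T \<inter> ?S))" by simp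
    also have "\<dots> = card ((?T - ?S) \<union> (?S - ?T)) + card (?T \<inter> ?S)"
      by (rule card_Un_disjoint) (use fin_T fin_S in auto)
    also have "card ((?T - ?S) \<union> (?S - ?T)) = card (?T - ?S) + card (?S - ?T)"
      using fin_T fin_S by (intro card_Un_disjoint) auto
    finally show ?thesis by simp
  qed
  hence m: "n - k1 - k2 = card (?T \<inter> ?S)" using assms(6,7) by simp
  show ?thesis
  proof
    show "\<exists>C. irr_decomposition l n (Vset l n {(t, s)}) C" using dec by blast
    show "\<forall>C. irr_decomposition l n (Vset l n {(t, s)}) C \<longrightarrow>
              card C = (n - k1 - k2) * fact (n - 1) + k1 * k2 * fact (n - 2)"
    proof (intro allI impI)
      fix C assume "irr_decomposition l n (Vset l n {(t, s)}) C"
      hence "C = ?D" using decomp_unique dec by blast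
      thus "card C = (n - k1 - k2) * fact (n - 1) + k1 * k2 * fact (n - 2)"
        using cardD m assms(6,7) by simp
    qed
  qed
qed


end
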